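(* Let $\pi(m)=(1/2)^m$ for $m\in\mathbb{N}^+$ (and $0$ otherwise), and let the proposal be $q(m,\{m+1\})=\theta=1-q(m,\{m-1\})$ for $m\in\mathbb{Z}$, $\theta\in(0,1)$. For $m,N\in\mathbb{N}^+$ let the weights be $$W_{m,N}=\frac{b_m-\varepsilon_m}{N}\,\mathrm{Bin}(N,s_m)+\varepsilon_m,$$ with $b_m=m$, $\varepsilon_m=m^{-(3-(m\bmod 3))}$, $\mathrm{Bin}(N,s)$ a binomial random variable with parameters $N$ and $s$, and $s_m\in[0,1]$ chosen so that $\mathbb{E}[W_{m,N}]=1$ (i.e. $s_m=\frac{1-\varepsilon_m}{b_m-\varepsilon_m}$ whenever $b_m\neq\varepsilon_m$). Then for every $N\in\mathbb{N}^+$ the chain generated by the noisy kernel $\tilde P_N$ is transient.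
   Context: Noisy Metropolis–Hastings kernel $\tilde P_N$: from state $m$, propose $Y\sim q(m,\cdot)$, draw independent weights $W\sim Q_{m,N}$, $U\sim Q_{Y,N}$ (the laws of $W_{m,N}$, $W_{Y,N}$), and move to $Y$ with probability $\min\{1,\frac{\pi(Y)q(Y,m)}{\pi(m)q(m,Y)}\cdot\frac{U}{W}\}$, otherwise stay at $m$ (proposals outside $\mathbb{N}^+$ are rejected). *)

theory Defs
  imports "HOL-Probability.Probability"
begin

definition pi_target :: "nat \<Rightarrow> real" where
  "pi_target m = (if m \<ge> 1 then (1/2) ^ m else 0)"

definition q_prop :: "real \<Rightarrow> int \<Rightarrow> int \<Rightarrow> real" where
  "q_prop \<theta> m y = (if y = m + 1 then \<theta> else if y = m - 1 then 1 - \<theta> else 0)"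

definition b_w :: "nat \<Rightarrow> real" where
  "b_w m = real m"

definition eps_w :: "nat \<Rightarrow> real" where
  "eps_w m = 1 / real m ^ (3 - m mod 3)"

text \<open>s_m chosen so that E[W_{m,N}] = 1 (when b_m = eps_m the law of W does not depend on s_m;
  we then take s_m = 0).\<close>
definition s_w :: "nat \<Rightarrow> real" where
  "s_w m = (if b_w m = eps_w m then 0 else (1 - eps_w m) / (b_w m - eps_w m))"

definition W_law :: "nat \<Rightarrow> nat \<Rightarrow> real pmf" where
  "W_law N m = map_pmf (\<lambda>k. (b_w m - eps_w m) / real N * real k + eps_w m)
                       (binomial_pmf N (s_w m))"

definition noisy_step :: "real \<Rightarrow> nat \<Rightarrow> nat \<Rightarrow> nat pmf" where
  "noisy_step \<theta> N m =
     do { up \<leftarrow> bernoulli_pmf \<theta>;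
          let y = (if up then int m + 1 else int m - 1);
          if y < 1 then return_pmf m
          else do {
            w \<leftarrow> W_law N m;
            u \<leftarrow> W_law N (nat y);
            acc \<leftarrow> bernoulli_pmf (min 1 ((pi_target (nat y) * q_prop \<theta> y (int m)) /
                                             (pi_target m * q_prop \<theta> (int m) y) * (u / w)));
            return_pmf (if acc then nat y else m) } }"

definition kernel_pow :: "('a \<Rightarrow> 'a pmf) \<Rightarrow> nat \<Rightarrow> 'a \<Rightarrow> 'a pmf" where
  "kernel_pow P n x = ((\<lambda>p. bind_pmf p P) ^^ n) (return_pmf x)"

text \<open>Transience (Meyn--Tweedie) for a chain on a countable state space S, with the counting
  measure as irreducibility measure: the chain is irreducible on S, and S is covered by the
  countably many singletons {y}, each uniformly transient, i.e.
  sup_{x in S} E_x[number of visits to y] < infinity.\<close>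
definition transient_chain :: "('a \<Rightarrow> 'a pmf) \<Rightarrow> 'a set \<Rightarrow> bool" where
  "transient_chain P S \<longleftrightarrow>
     (\<forall>x\<in>S. \<forall>y\<in>S. \<exists>n. pmf (kernel_pow P n x) y > 0) \<and>
     (\<forall>y\<in>S. (SUP x\<in>S. (\<Sum>n. ennreal (pmf (kernel_pow P n x) y))) < \<infinity>)"

end

theory Submission
  imports Defs
begin

lemma integrable_pmf_indicator[simp]: "integrable (measure_pmf p) (indicat_real B)"
  by (rule measure_pmf.integrable_const_bound[where B=1]) (auto split: split_indicator)

lemma exp_lower:
  fixes p :: "'a pmf" and F :: "'a \<Rightarrow> real"
  assumes "\<And>x. x \<in> set_pmf p \<Longrightarrow> 0 \<le> F x" "\<And>x. x \<in> set_pmf p \<Longrightarrow> F x \<le> 1"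
    "\<And>x. x \<in> set_pmf p \<Longrightarrow> x \<in> B \<Longrightarrow> c \<le> F x" "0 \<le> c"
  shows "c * measure_pmf.prob p B \<le> measure_pmf.expectation p F"
proof -
  have "c * measure_pmf.prob p B = measure_pmf.expectation p (\<lambda>x. c * indicator B x)" by simp
  also have "\<dots> \<le> measure_pmf.expectation p F"
  proof (rule integral_mono_AE)
    show "integrable (measure_pmf p) (\<lambda>x. c * indicator B x)" by simp
    show "integrable (measure_pmf p) F"
      using assms(1,2) by (intro measure_pmf.integrable_const_bound[where B=1]) (auto intro!: AE_pmfI)
    show "AE x in measure_pmf p. c * indicator B x \<le> F x"
      using assms by (intro AE_pmfI) (auto split: split_indicator)
  qed
  finally show ?thesis .
qed

lemma exp_upper:
  fixes p :: "'a pmf" and F :: "'a \<Rightarrow> real"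
  assumes "\<And>x. x \<in> set_pmf p \<Longrightarrow> 0 \<le> F x" "\<And>x. x \<in> set_pmf p \<Longrightarrow> F x \<le> 1"
    "\<And>x. x \<in> set_pmf p \<Longrightarrow> x \<in> B \<Longrightarrow> F x \<le> c"
  shows "measure_pmf.expectation p F \<le> c * measure_pmf.prob p B + (1 - measure_pmf.prob p B)"
proof -
  have "measure_pmf.expectation p F \<le> measure_pmf.expectation p (\<lambda>x. c * indicator B x + (1 - indicator B x))"
  proof (rule integral_mono_AE)
    show "integrable (measure_pmf p) (\<lambda>x. c * indicator B x + (1 - indicator B x))"
      by (rule measure_pmf.integrable_const_bound[where B="\<bar>c\<bar>+1"]) (auto split: split_indicator)
    show "integrable (measure_pmf p) F"
      using assms(1,2) by (intro measure_pmf.integrable_const_bound[where B=1]) (auto intro!: AE_pmfI)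
    show "AE x in measure_pmf p. F x \<le> c * indicator B x + (1 - indicator B x)"
      using assms by (intro AE_pmfI) (auto split: split_indicator)
  qed
  also have "\<dots> = c * measure_pmf.prob p B + (1 - measure_pmf.prob p B)"
    by (simp add: integral_diff)
  finally show ?thesis .
qed

lemma exp_bounds01:
  fixes p :: "'a pmf" and F :: "'a \<Rightarrow> real"
  assumes "\<And>x. x \<in> set_pmf p \<Longrightarrow> 0 \<le> F x" "\<And>x. x \<in> set_pmf p \<Longrightarrow> F x \<le> 1"
  shows "0 \<le> measure_pmf.expectation p F" "measure_pmf.expectation p F \<le> 1"
proof -
  show "0 \<le> measure_pmf.expectation p F"
    using assms by (intro integral_nonneg_AE) (auto intro!: AE_pmfI)
  have "measure_pmf.expectation p F \<le> measure_pmf.expectation p (\<lambda>x. 1)"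
    using assms by (intro integral_mono_AE measure_pmf.integrable_const_bound[where B=1]) (auto intro!: AE_pmfI)
  then show "measure_pmf.expectation p F \<le> 1" by simp
qed

lemma pow_ge_self: "1 \<le> k \<Longrightarrow> 1 \<le> x \<Longrightarrow> (x::real) \<le> x ^ k"
  by (metis power_increasing power_one_right)

lemma eps_pos: "1 \<le> m \<Longrightarrow> 0 < eps_w m"
  by (simp add: eps_w_def)

lemma eps_le_inv: "1 \<le> m \<Longrightarrow> eps_w m \<le> 1 / real m"
proof -
  assume m: "1 \<le> m"
  have "real m \<le> real m ^ (3 - m mod 3)"
    using m by (intro pow_ge_self) auto
  then show ?thesis using m unfolding eps_w_def
    by (intro divide_left_mono) auto
qed

lemma eps_le1: "1 \<le> m \<Longrightarrow> eps_w m \<le> 1"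
  using eps_le_inv[of m] by (smt (verit) of_nat_1 divide_le_eq_1 of_nat_mono)

lemma eps_le_b: "1 \<le> m \<Longrightarrow> eps_w m \<le> b_w m"
  using eps_le1[of m] by (simp add: b_w_def)

lemma s_w_1: "s_w 1 = 0"
  by (simp add: s_w_def b_w_def eps_w_def)

lemma s_w_Suc0: "s_w (Suc 0) = 0"
  using s_w_1 by simp

lemma eps_le_half: "2 \<le> m \<Longrightarrow> eps_w m \<le> 1/2"
proof -
  assume m: "2 \<le> m"
  have "1 / real m \<le> 1/2" using m by (simp add: field_simps)
  moreover have "eps_w m \<le> 1 / real m" using eps_le_inv[of m] m by simp
  ultimately show ?thesis by linarith
qed

lemma s_w_ge2:
  assumes m: "2 \<le> m"
  shows "s_w m = (1 - eps_w m) / (real m - eps_w m)" "1 / (2 * real m) \<le> s_w m"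
        "s_w m \<le> 1 / real m" "0 < s_w m" "s_w m < 1"
proof -
  have e0: "0 < eps_w m" using eps_pos m by simp
  have e1: "eps_w m \<le> 1/2" using eps_le_half m by simp
  have rm: "2 \<le> real m" using m by simp
  have ne: "b_w m \<noteq> eps_w m" using e1 rm by (simp add: b_w_def)
  show s: "s_w m = (1 - eps_w m) / (real m - eps_w m)"
    using ne by (simp add: s_w_def b_w_def)
  have d0: "0 < real m - eps_w m" using e1 rm by simp
  have "eps_w m * (real m * 2) \<le> real m"
    using mult_right_mono[of "eps_w m * 2" 1 "real m"] e1 rm by (simp add: algebra_simps)
  then have "eps_w m * (real m * 2) \<le> eps_w m + real m" using e0 by linarith
  then show "1 / (2 * real m) \<le> s_w m" unfolding s using d0 e0 e1 rm
    by (simp add: field_simps)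
  show "s_w m \<le> 1 / real m" unfolding s using d0 e0 e1 rm
    by (simp add: field_simps)
  show "0 < s_w m" unfolding s using d0 e1 by simp
  show "s_w m < 1" unfolding s using d0 e0 e1 rm by (simp add: field_simps)
qed

lemma s_w_bounds:
  assumes m: "1 \<le> m"
  shows "0 \<le> s_w m" "s_w m \<le> 1 / real m" "s_w m < 1"
proof -
  consider "m = 1" | "2 \<le> m" using m by linarith
  then have "0 \<le> s_w m \<and> s_w m \<le> 1 / real m \<and> s_w m < 1"
  proof cases
    case 1 then show ?thesis by (simp add: s_w_Suc0)
  next
    case 2 then show ?thesis using s_w_ge2[OF 2] by simp
  qed
  then show "0 \<le> s_w m" "s_w m \<le> 1 / real m" "s_w m < 1" by auto
qed

lemma W_support:
  assumes "1 \<le> m" "w \<in> set_pmf (W_law N m)"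
  shows "eps_w m \<le> w" "0 < w"
proof -
  obtain k where w: "w = (b_w m - eps_w m) / real N * real k + eps_w m"
    using assms(2) by (auto simp: W_law_def)
  have "0 \<le> (b_w m - eps_w m) / real N * real k"
    using eps_le_b[OF assms(1)] by simp
  then show "eps_w m \<le> w" using w by simp
  then show "0 < w" using eps_pos[OF assms(1)] by simp
qed

lemma Z_lower:
  assumes "1 \<le> m"
  shows "(1 - s_w m) ^ N \<le> measure_pmf.prob (W_law N m) {eps_w m}"
proof -
  have "(1 - s_w m) ^ N = measure_pmf.prob (binomial_pmf N (s_w m)) {0}"
    using s_w_bounds[OF assms] by (simp add: measure_pmf_single)
  also have "\<dots> \<le> measure_pmf.prob (W_law N m) {eps_w m}"
    unfolding W_law_def measure_map_pmf
    by (intro measure_pmf.finite_measure_mono) auto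
  finally show ?thesis .
qed

lemma tail_lower:
  assumes "1 \<le> m"
  shows "1 - (1 - s_w m) ^ N \<le> measure_pmf.prob (W_law N m) {u. (b_w m - eps_w m) / real N \<le> u}"
proof -
  have "1 - (1 - s_w m) ^ N = 1 - measure_pmf.prob (binomial_pmf N (s_w m)) {0}"
    using s_w_bounds[OF assms] by (simp add: measure_pmf_single)
  also have "\<dots> = measure_pmf.prob (binomial_pmf N (s_w m)) (UNIV - {0})"
    using measure_pmf.prob_compl[of "{0}" "binomial_pmf N (s_w m)"] by simp
  also have "\<dots> \<le> measure_pmf.prob (W_law N m) {u. (b_w m - eps_w m) / real N \<le> u}"
    unfolding W_law_def measure_map_pmf
  proof (intro measure_pmf.finite_measure_mono)
    have "0 \<le> b_w m - eps_w m" using eps_le_b[OF assms] by simp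
    moreover have "0 \<le> eps_w m" using eps_pos[OF assms] by simp
    ultimately have c0: "0 \<le> (b_w m - eps_w m) / real N" "0 \<le> eps_w m" by auto
    show "UNIV - {0} \<subseteq> (\<lambda>k. (b_w m - eps_w m) / real N * real k + eps_w m) -`
        {u. (b_w m - eps_w m) / real N \<le> u}"
    proof
      fix k :: nat assume "k \<in> UNIV - {0}"
      then have "1 \<le> real k" by auto
      then have "(b_w m - eps_w m) / real N * 1 \<le> (b_w m - eps_w m) / real N * real k"
        using c0 by (intro mult_left_mono) auto
      then show "k \<in> (\<lambda>k. (b_w m - eps_w m) / real N * real k + eps_w m) -`
        {u. (b_w m - eps_w m) / real N \<le> u}" using c0 by auto
    qed
  qed auto
  finally show ?thesis .
qed

lemma bern_upper: "0 \<le> s \<Longrightarrow> s \<le> 1 \<Longrightarrow> 1 \<le> N \<Longrightarrow> (1 - s) ^ N \<le> 1 - (s::real)"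
proof -
  assume a: "0 \<le> s" "s \<le> 1" "1 \<le> N"
  have "(1 - s) ^ N \<le> (1 - s) ^ 1" using a by (intro power_decreasing) auto
  then show ?thesis by simp
qed

lemma bern_lower: "0 \<le> s \<Longrightarrow> s \<le> 1 \<Longrightarrow> 1 - real N * s \<le> (1 - (s::real)) ^ N"
  using Bernoulli_inequality[of "-s" N] by simp

definition acc_step :: "nat \<Rightarrow> nat \<Rightarrow> nat \<Rightarrow> real \<Rightarrow> nat pmf" where
  "acc_step N m y c = W_law N m \<bind> (\<lambda>w. W_law N y \<bind> (\<lambda>u.
      bernoulli_pmf (min 1 (c * u / w)) \<bind> (\<lambda>acc. return_pmf (if acc then y else m))))"

definition cu :: "real \<Rightarrow> real" where "cu \<theta> = (1 - \<theta>) / (2 * \<theta>)"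
definition cd :: "real \<Rightarrow> real" where "cd \<theta> = 2 * \<theta> / (1 - \<theta>)"

lemma noisy_step_alt:
  assumes "0 < \<theta>" "\<theta> < 1" "1 \<le> m"
  shows "noisy_step \<theta> N m = bernoulli_pmf \<theta> \<bind> (\<lambda>up. if up then acc_step N m (Suc m) (cu \<theta>)
            else if m = 1 then return_pmf m else acc_step N m (m - 1) (cd \<theta>))"
  unfolding noisy_step_def Let_def
proof (intro bind_pmf_cong refl)
  fix up :: bool
  show "(if (if up then int m + 1 else int m - 1) < 1 then return_pmf m
         else W_law N m \<bind>
              (\<lambda>w. W_law N (nat (if up then int m + 1 else int m - 1)) \<bind>
                    (\<lambda>u. bernoulli_pmf
                           (min 1
                             (pi_target (nat (if up then int m + 1 else int m - 1)) *
                              q_prop \<theta> (if up then int m + 1 else int m - 1) (int m) /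
                              (pi_target m * q_prop \<theta> (int m) (if up then int m + 1 else int m - 1)) *
                              (u / w))) \<bind>
                          (\<lambda>acc. return_pmf (if acc then nat (if up then int m + 1 else int m - 1) else m))))) =
        (if up then acc_step N m (Suc m) (cu \<theta>)
            else if m = 1 then return_pmf m else acc_step N m (m - 1) (cd \<theta>))"
  proof (cases up)
    case True
    have "pi_target (Suc m) * q_prop \<theta> (int m + 1) (int m) / (pi_target m * q_prop \<theta> (int m) (int m + 1))
         = cu \<theta>" using assms by (simp add: pi_target_def q_prop_def cu_def field_simps)
    moreover have n: "nat (int m + 1) = Suc m" by simp
    ultimately show ?thesis using True assms by (simp add: acc_step_def, simp only: n)
  next
    case False
    show ?thesis
    proof (cases "m = 1")
      case True then show ?thesis using False by simp
    next
      case m2: False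
      have e: "nat (int m - 1) = m - 1" using assms by simp
      have "pi_target (m - 1) * q_prop \<theta> (int m - 1) (int m) / (pi_target m * q_prop \<theta> (int m) (int m - 1))
         = cd \<theta>" using assms m2 by (simp add: pi_target_def q_prop_def cd_def field_simps power_diff)
      then show ?thesis using False m2 assms e by (simp add: acc_step_def, simp only: e)
    qed
  qed
qed

definition Acc :: "nat \<Rightarrow> nat \<Rightarrow> nat \<Rightarrow> real \<Rightarrow> real" where
  "Acc N m y c = measure_pmf.expectation (W_law N m)
      (\<lambda>w. measure_pmf.expectation (W_law N y) (\<lambda>u. min 1 (c * u / w)))"

lemma exp_cong_pmf:
  "(\<And>x. x \<in> set_pmf p \<Longrightarrow> f x = g x) \<Longrightarrow> measure_pmf.expectation p f = measure_pmf.expectation p (g :: _ \<Rightarrow> real)"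
  by (intro integral_cong_AE) (auto intro!: AE_pmfI)

lemma pmf_acc_step:
  assumes "1 \<le> m" "1 \<le> y" "y \<noteq> m" "0 \<le> c"
  shows "pmf (acc_step N m y c) y = Acc N m y c"
  unfolding acc_step_def Acc_def pmf_bind
  apply (rule exp_cong_pmf)+
  subgoal for w u
  proof -
    assume w: "w \<in> set_pmf (W_law N m)" and u: "u \<in> set_pmf (W_law N y)"
    have "0 < w" "0 < u" using W_support assms w u by auto
    then have "0 \<le> c * u / w" using assms by simp
    then show ?thesis using assms by (simp add: indicator_def)
  qed
  done

lemma set_acc_step: "set_pmf (acc_step N m y c) \<subseteq> {y, m}"
  unfolding acc_step_def by auto

lemma pmf_bern_bind: "0 \<le> \<theta> \<Longrightarrow> \<theta> \<le> 1 \<Longrightarrow>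
   pmf (bernoulli_pmf \<theta> \<bind> F) x = pmf (F True) x * \<theta> + pmf (F False) x * (1 - \<theta>)"
  by (simp add: pmf_bind)

lemma set_noisy:
  assumes "0 < \<theta>" "\<theta> < 1" "1 \<le> m"
  shows "set_pmf (noisy_step \<theta> N m) \<subseteq> {m - 1, m, Suc m}" "set_pmf (noisy_step \<theta> N m) \<subseteq> {k. 1 \<le> k}"
proof -
  have "set_pmf (noisy_step \<theta> N m) \<subseteq> (if m = 1 then {m, Suc m} else {m - 1, m, Suc m})"
    unfolding noisy_step_alt[OF assms] acc_step_def by (auto split: if_splits)
  then show "set_pmf (noisy_step \<theta> N m) \<subseteq> {m - 1, m, Suc m}" "set_pmf (noisy_step \<theta> N m) \<subseteq> {k. 1 \<le> k}"
    using assms(3) by (auto split: if_splits)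
qed

definition pu :: "real \<Rightarrow> nat \<Rightarrow> nat \<Rightarrow> real" where "pu \<theta> N m = pmf (noisy_step \<theta> N m) (Suc m)"
definition pd :: "real \<Rightarrow> nat \<Rightarrow> nat \<Rightarrow> real" where "pd \<theta> N m = pmf (noisy_step \<theta> N m) (m - 1)"

lemma cu_pos: "0 < \<theta> \<Longrightarrow> \<theta> < 1 \<Longrightarrow> 0 < cu \<theta>" by (simp add: cu_def)
lemma cd_pos: "0 < \<theta> \<Longrightarrow> \<theta> < 1 \<Longrightarrow> 0 < cd \<theta>" by (simp add: cd_def)

lemma pu_eq:
  assumes "0 < \<theta>" "\<theta> < 1" "1 \<le> m"
  shows "pu \<theta> N m = \<theta> * Acc N m (Suc m) (cu \<theta>)"
proof -
  have "pmf (if m = 1 then return_pmf m else acc_step N m (m - 1) (cd \<theta>)) (Suc m) = 0"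
    using set_acc_step[of N m "m-1" "cd \<theta>"] by (auto simp: pmf_eq_0_set_pmf)
  then show ?thesis
    unfolding pu_def noisy_step_alt[OF assms] using assms cu_pos[OF assms(1,2)]
    by (simp add: pmf_bern_bind pmf_acc_step)
qed

lemma pd_eq:
  assumes "0 < \<theta>" "\<theta> < 1" "2 \<le> m"
  shows "pd \<theta> N m = (1 - \<theta>) * Acc N m (m - 1) (cd \<theta>)"
proof -
  have m: "1 \<le> m" using assms by simp
  have "pmf (acc_step N m (Suc m) (cu \<theta>)) (m - 1) = 0"
    using set_acc_step[of N m "Suc m" "cu \<theta>"] assms by (auto simp: pmf_eq_0_set_pmf)
  then show ?thesis
    unfolding pd_def noisy_step_alt[OF assms(1,2) m] using assms cd_pos[OF assms(1,2)]
    by (simp add: pmf_bern_bind pmf_acc_step)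
qed

lemma pd_1:
  assumes "0 < \<theta>" "\<theta> < 1"
  shows "pd \<theta> N 1 = 0"
  using set_noisy(2)[OF assms, of 1 N] unfolding pd_def by (auto simp: pmf_eq_0_set_pmf)

definition Z :: "nat \<Rightarrow> nat \<Rightarrow> real" where "Z N m = measure_pmf.prob (W_law N m) {eps_w m}"

lemma G_bounds:
  assumes "1 \<le> y" "0 \<le> c" "0 < w"
  shows "0 \<le> measure_pmf.expectation (W_law N y) (\<lambda>u. min 1 (c * u / w))"
        "measure_pmf.expectation (W_law N y) (\<lambda>u. min 1 (c * u / w)) \<le> 1"
proof -
  have *: "0 \<le> min 1 (c * u / w)" "min 1 (c * u / w) \<le> 1" if "u \<in> set_pmf (W_law N y)" for u
    using W_support[OF assms(1) that] assms by auto
  show "0 \<le> measure_pmf.expectation (W_law N y) (\<lambda>u. min 1 (c * u / w))"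
    by (rule exp_bounds01(1)) (use * in auto)
  show "measure_pmf.expectation (W_law N y) (\<lambda>u. min 1 (c * u / w)) \<le> 1"
    by (rule exp_bounds01(2)) (use * in auto)
qed

lemma G_bounds':
  assumes "1 \<le> m" "1 \<le> y" "0 \<le> c" "w \<in> set_pmf (W_law N m)"
  shows "0 \<le> measure_pmf.expectation (W_law N y) (\<lambda>u. min 1 (c * u / w))"
        "measure_pmf.expectation (W_law N y) (\<lambda>u. min 1 (c * u / w)) \<le> 1"
  using G_bounds[OF assms(2,3) W_support(2)[OF assms(1,4)]] by auto

lemma Acc_bounds:
  assumes "1 \<le> m" "1 \<le> y" "0 \<le> c"
  shows "0 \<le> Acc N m y c" "Acc N m y c \<le> 1"
  unfolding Acc_def
  by (rule exp_bounds01(1), rule G_bounds'[OF assms], assumption, rule G_bounds'[OF assms], assumption)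
     (rule exp_bounds01(2), rule G_bounds'[OF assms], assumption, rule G_bounds'[OF assms], assumption)

lemma Acc_lower_gen:
  assumes "1 \<le> m" "1 \<le> y" "0 \<le> c" "0 \<le> a"
    "a \<le> measure_pmf.expectation (W_law N y) (\<lambda>u. min 1 (c * u / eps_w m))"
  shows "a * Z N m \<le> Acc N m y c"
  unfolding Acc_def Z_def
proof (rule exp_lower)
  fix x assume x: "x \<in> set_pmf (W_law N m)"
  show "0 \<le> measure_pmf.expectation (W_law N y) (\<lambda>u. min 1 (c * u / x))" by (rule G_bounds'[OF assms(1-3) x])
  show "measure_pmf.expectation (W_law N y) (\<lambda>u. min 1 (c * u / x)) \<le> 1" by (rule G_bounds'[OF assms(1-3) x])
  assume "x \<in> {eps_w m}"
  then show "a \<le> measure_pmf.expectation (W_law N y) (\<lambda>u. min 1 (c * u / x))" using assms(5) by simp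
qed (rule assms(4))

lemma Acc_lower:
  assumes "1 \<le> m" "1 \<le> y" "0 \<le> c"
  shows "min 1 (c * eps_w y / eps_w m) * Z N y * Z N m \<le> Acc N m y c"
proof (rule Acc_lower_gen[OF assms])
  have em: "0 < eps_w m" "0 < eps_w y" using eps_pos assms by auto
  show "0 \<le> min 1 (c * eps_w y / eps_w m) * Z N y"
    using assms em by (simp add: Z_def)
  show "min 1 (c * eps_w y / eps_w m) * Z N y \<le> measure_pmf.expectation (W_law N y) (\<lambda>u. min 1 (c * u / eps_w m))"
    unfolding Z_def
  proof (rule exp_lower)
    fix u assume u: "u \<in> set_pmf (W_law N y)"
    have "0 < u" using W_support[OF assms(2) u] by simp
    then show "0 \<le> min 1 (c * u / eps_w m)" "min 1 (c * u / eps_w m) \<le> 1" using em assms by auto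
  next
    show "0 \<le> min 1 (c * eps_w y / eps_w m)" using assms em by simp
  qed simp
qed

lemma Acc_upper:
  assumes "1 \<le> m" "1 \<le> y" "0 \<le> c"
  shows "Acc N m y c \<le> min 1 (c * eps_w y / eps_w m) + (1 - Z N m) + (1 - Z N y)"
proof -
  let ?G = "\<lambda>w. measure_pmf.expectation (W_law N y) (\<lambda>u. min 1 (c * u / w))"
  let ?g = "min 1 (c * eps_w y / eps_w m)"
  have em: "0 < eps_w m" "0 < eps_w y" using eps_pos assms by auto
  have "?G (eps_w m) \<le> ?g * Z N y + (1 - Z N y)"
    unfolding Z_def
  proof (rule exp_upper)
    fix u assume u: "u \<in> set_pmf (W_law N y)"
    have "0 < u" using W_support[OF assms(2) u] by simp
    then show "0 \<le> min 1 (c * u / eps_w m)" "min 1 (c * u / eps_w m) \<le> 1" using em assms by auto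
  qed simp
  also have "\<dots> \<le> ?g + (1 - Z N y)"
  proof -
    have "0 \<le> ?g" using assms em by simp
    moreover have "Z N y \<le> 1" by (simp add: Z_def)
    ultimately have "?g * Z N y \<le> ?g" by (rule mult_left_le[rotated])
    then show ?thesis by simp
  qed
  finally have g: "?G (eps_w m) \<le> ?g + (1 - Z N y)" .
  have "Acc N m y c \<le> ?G (eps_w m) * Z N m + (1 - Z N m)"
    unfolding Acc_def Z_def
  proof (rule exp_upper)
    fix x assume x: "x \<in> set_pmf (W_law N m)"
    show "0 \<le> ?G x" by (rule G_bounds'[OF assms x])
    show "?G x \<le> 1" by (rule G_bounds'[OF assms x])
  qed simp
  also have "\<dots> \<le> ?G (eps_w m) + (1 - Z N m)"
  proof -
    have "0 \<le> ?G (eps_w m)" by (rule G_bounds(1)[OF assms(2,3) em(1)])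
    moreover have "Z N m \<le> 1" by (simp add: Z_def)
    ultimately have "?G (eps_w m) * Z N m \<le> ?G (eps_w m)" by (rule mult_left_le[rotated])
    then show ?thesis by simp
  qed
  finally show ?thesis using g by linarith
qed

lemma Z_low:
  assumes "1 \<le> m"
  shows "1 - real N / real m \<le> Z N m" "0 < Z N m" "Z N m \<le> 1"
proof -
  have s: "0 \<le> s_w m" "s_w m \<le> 1 / real m" "s_w m < 1" using s_w_bounds[OF assms] by auto
  have "1 - real N / real m \<le> 1 - real N * s_w m"
    using s mult_left_mono[OF s(2), of "real N"] by simp
  also have "\<dots> \<le> (1 - s_w m) ^ N" using bern_lower[of "s_w m" N] s by simp
  also have "\<dots> \<le> Z N m" using Z_lower[OF assms] by (simp add: Z_def)
  finally show "1 - real N / real m \<le> Z N m" .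
  have "0 < (1 - s_w m) ^ N" using s by simp
  then show "0 < Z N m" using Z_lower[OF assms, of N] by (simp add: Z_def)
  show "Z N m \<le> 1" by (simp add: Z_def)
qed

definition rho :: "real \<Rightarrow> nat \<Rightarrow> nat \<Rightarrow> real" where "rho \<theta> N m = pd \<theta> N m / pu \<theta> N m"

lemma ineq_a: "1 \<le> (k::real) \<Longrightarrow> (k+1)^2 / k^3 \<le> 8 / (k+1)"
proof -
  assume k: "1 \<le> k"
  have "(k+1)^3 \<le> (2*k)^3" using k by (intro power_mono) auto
  then have "(k+1)^2 * (k+1) \<le> 8 * k^3" by (simp add: power3_eq_cube power2_eq_square algebra_simps)
  then show ?thesis using k by (simp add: field_simps)
qed

lemma ineq_b: "1 \<le> (k::real) \<Longrightarrow> (k+1) / k^2 \<le> 4 / (k+1)"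
proof -
  assume k: "1 \<le> k"
  have "(k+1)^2 \<le> (2*k)^2" using k by (intro power_mono) auto
  then have "(k+1) * (k+1) \<le> 4 * k^2" by (simp add: power2_eq_square algebra_simps)
  then show ?thesis using k by (simp add: field_simps)
qed

lemma ineq_c: "1 \<le> (k::real) \<Longrightarrow> 1 / k \<le> 2 / (k+1)"
  by (simp add: field_simps)

lemma rho_bound:
  assumes "0 < \<theta>" "\<theta> < 1" "2 \<le> m" "Acc N m (m - 1) (cd \<theta>) \<le> D" "0 < E" "E \<le> Acc N m (Suc m) (cu \<theta>)"
  shows "rho \<theta> N m \<le> (1 - \<theta>) / \<theta> * D / E" "0 \<le> rho \<theta> N m"
proof -
  have m1: "1 \<le> m" "1 \<le> m - 1" using assms by auto
  have d0: "0 \<le> Acc N m (m - 1) (cd \<theta>)" using Acc_bounds[OF m1 less_imp_le[OF cd_pos[OF assms(1,2)]]] by auto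
  have "rho \<theta> N m = ((1 - \<theta>) / \<theta>) * (Acc N m (m - 1) (cd \<theta>) / Acc N m (Suc m) (cu \<theta>))"
    unfolding rho_def using assms pu_eq[OF assms(1,2) m1(1)] pd_eq[OF assms(1,2,3)] by simp
  also have "\<dots> \<le> ((1 - \<theta>) / \<theta>) * (D / E)"
    using assms d0 by (intro mult_left_mono frac_le) auto
  finally show "rho \<theta> N m \<le> (1 - \<theta>) / \<theta> * D / E" by simp
  show "0 \<le> rho \<theta> N m"
    unfolding rho_def using assms pu_eq[OF assms(1,2) m1(1)] pd_eq[OF assms(1,2,3)] d0 by simp
qed

definition big :: "real \<Rightarrow> nat \<Rightarrow> nat \<Rightarrow> bool" where
  "big \<theta> N m \<longleftrightarrow> 2 \<le> m \<and> 4 * real N \<le> real m \<and> 4 + real N \<le> cu \<theta> * real m"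

lemma Z_34: "1 \<le> m \<Longrightarrow> 4 * real N \<le> real m \<Longrightarrow> 3/4 \<le> Z N m"
proof -
  assume m: "1 \<le> m" "4 * real N \<le> real m"
  have "real N / real m \<le> 1/4" using m by (simp add: field_simps)
  then show ?thesis using Z_low(1)[OF m(1), of N] by linarith
qed

lemma big_Suc: "big \<theta> N m \<Longrightarrow> 0 < \<theta> \<Longrightarrow> \<theta> < 1 \<Longrightarrow> big \<theta> N (Suc m)"
proof -
  assume b: "big \<theta> N m" and t: "0 < \<theta>" "\<theta> < 1"
  have "cu \<theta> * real m \<le> cu \<theta> * real (Suc m)" using cu_pos[OF t] by (intro mult_left_mono) auto
  then show ?thesis using b unfolding big_def by auto
qed

lemma Eu_half:
  assumes "1 \<le> m" "4 * real N \<le> real m" "0 < \<theta>" "\<theta> < 1" "1 \<le> cu \<theta> * eps_w (Suc m) / eps_w m"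
  shows "1/2 \<le> Acc N m (Suc m) (cu \<theta>)"
proof -
  have z: "3/4 \<le> Z N m" "3/4 \<le> Z N (Suc m)" using Z_34 assms by auto
  have "(3/4) * (3/4) \<le> Z N (Suc m) * Z N m" using z by (intro mult_mono) auto
  moreover have "min 1 (cu \<theta> * eps_w (Suc m) / eps_w m) = 1" using assms(5) by simp
  ultimately have "(3/4) * (3/4) \<le> min 1 (cu \<theta> * eps_w (Suc m) / eps_w m) * Z N (Suc m) * Z N m" by simp
  also have "\<dots> \<le> Acc N m (Suc m) (cu \<theta>)"
    using Acc_lower[of m "Suc m" "cu \<theta>" N] assms cu_pos[OF assms(3,4)] by simp
  finally show ?thesis by simp
qed

lemma eps_m0: "m mod 3 = 0 \<Longrightarrow> eps_w m = 1 / real m ^ 3" by (simp add: eps_w_def)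
lemma eps_m1: "m mod 3 = 1 \<Longrightarrow> eps_w m = 1 / real m ^ 2" by (simp add: eps_w_def)
lemma eps_m2: "m mod 3 = 2 \<Longrightarrow> eps_w m = 1 / real m" by (simp add: eps_w_def)

definition TT :: "real \<Rightarrow> real" where "TT \<theta> = (1 - \<theta>) / \<theta>"

lemma TT_pos: "0 < \<theta> \<Longrightarrow> \<theta> < 1 \<Longrightarrow> 0 < TT \<theta>" by (simp add: TT_def)

lemma rho_R0:
  assumes "0 < \<theta>" "\<theta> < 1" "big \<theta> N m" "m mod 3 = 0"
  shows "rho \<theta> N m \<le> 2 * TT \<theta>"
proof -
  have m: "2 \<le> m" "4 * real N \<le> real m" "4 + real N \<le> cu \<theta> * real m" using assms(3) by (auto simp: big_def)
  have mod1: "Suc m mod 3 = 1" using assms(4) by presburger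
  have x: "1 \<le> real m" using m by simp
  have "(real m + 1)^2 \<le> (2 * real m)^2" using x by (intro power_mono) auto
  also have "\<dots> = 4 * real m ^ 2" by (simp add: power2_eq_square)
  also have "\<dots> \<le> cu \<theta> * real m * real m ^ 2" using m by (intro mult_right_mono) auto
  finally have "(real m + 1)^2 \<le> cu \<theta> * real m ^ 3" by (simp add: power3_eq_cube power2_eq_square algebra_simps)
  then have r: "1 \<le> cu \<theta> * eps_w (Suc m) / eps_w m"
    using x unfolding eps_m0[OF assms(4)] eps_m1[OF mod1] by (simp add: field_simps)
  have e: "1/2 \<le> Acc N m (Suc m) (cu \<theta>)" using Eu_half[OF _ m(2) assms(1,2) r] m by simp
  have d: "Acc N m (m - 1) (cd \<theta>) \<le> 1" using Acc_bounds[of m "m-1" "cd \<theta>" N] cd_pos[OF assms(1,2)] m by simp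
  have "rho \<theta> N m \<le> (1 - \<theta>) / \<theta> * 1 / (1/2)" by (rule rho_bound(1)[OF assms(1,2) m(1) d _ e]) simp
  then show ?thesis by (simp add: TT_def algebra_simps)
qed

lemma one_minus_Z: "1 \<le> m \<Longrightarrow> 1 - Z N m \<le> real N / real m"
  using Z_low(1)[of m N] by linarith

lemma rho_R1:
  assumes "0 < \<theta>" "\<theta> < 1" "big \<theta> N m" "m mod 3 = 1"
  shows "rho \<theta> N m \<le> 2 * TT \<theta> * (3 * real N + 8 * cd \<theta>) / real m"
proof -
  have m: "2 \<le> m" "4 * real N \<le> real m" "4 + real N \<le> cu \<theta> * real m" using assms(3) by (auto simp: big_def)
  have mod2: "Suc m mod 3 = 2" using assms(4) by presburger
  have mod0: "(m - 1) mod 3 = 0" using assms(4) m by presburger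
  have x: "2 \<le> real m" using m by simp
  have "real m + 1 \<le> 4 * real m" using x by simp
  also have "\<dots> \<le> cu \<theta> * real m * real m" using m by (intro mult_right_mono) auto
  finally have "real m + 1 \<le> cu \<theta> * real m ^ 2" by (simp add: power2_eq_square algebra_simps)
  then have r: "1 \<le> cu \<theta> * eps_w (Suc m) / eps_w m"
    using x unfolding eps_m1[OF assms(4)] eps_m2[OF mod2] by (simp add: field_simps)
  have e: "1/2 \<le> Acc N m (Suc m) (cu \<theta>)" using Eu_half[OF _ m(2) assms(1,2) r] m by simp
  define k where "k = real m - 1"
  have k1: "1 \<le> k" and mk: "real m = k + 1" using x by (auto simp: k_def)
  have rm1: "real (m - 1) = k" using m by (simp add: k_def of_nat_diff)
  have cd0: "0 < cd \<theta>" using cd_pos[OF assms(1,2)] .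
  have "Acc N m (m - 1) (cd \<theta>) \<le> min 1 (cd \<theta> * eps_w (m - 1) / eps_w m) + (1 - Z N m) + (1 - Z N (m - 1))"
    using Acc_upper[of m "m - 1" "cd \<theta>" N] m cd0 by simp
  also have "\<dots> \<le> cd \<theta> * ((k+1)^2 / k^3) + real N / (k + 1) + real N / k"
  proof -
    have "min 1 (cd \<theta> * eps_w (m - 1) / eps_w m) \<le> cd \<theta> * eps_w (m - 1) / eps_w m" by simp
    also have "\<dots> = cd \<theta> * ((k+1)^2 / k^3)"
      unfolding eps_m1[OF assms(4)] eps_m0[OF mod0] rm1 mk using k1 by (simp add: field_simps)
    finally have mn: "min 1 (cd \<theta> * eps_w (m - 1) / eps_w m) \<le> cd \<theta> * ((k+1)^2 / k^3)" .
    have z1: "1 - Z N m \<le> real N / (k + 1)" using one_minus_Z[of m N] m mk by simp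
    have "1 \<le> m - 1" using m by simp
    then have z2: "1 - Z N (m - 1) \<le> real N / k" using one_minus_Z[of "m - 1" N] rm1 by simp
    show ?thesis using mn z1 z2 by linarith
  qed
  also have "\<dots> \<le> cd \<theta> * (8 / (k+1)) + real N / (k + 1) + real N * (2 / (k + 1))"
  proof -
    have "cd \<theta> * ((k+1)^2 / k^3) \<le> cd \<theta> * (8 / (k+1))" using ineq_a[OF k1] cd0 by (intro mult_left_mono) auto
    moreover have "real N * (1 / k) \<le> real N * (2 / (k+1))" using ineq_c[OF k1] by (intro mult_left_mono) auto
    ultimately show ?thesis by simp
  qed
  also have "\<dots> = (3 * real N + 8 * cd \<theta>) / real m" unfolding mk using k1 by (simp add: add_divide_distrib)
  finally have d: "Acc N m (m - 1) (cd \<theta>) \<le> (3 * real N + 8 * cd \<theta>) / real m" .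
  have "rho \<theta> N m \<le> (1 - \<theta>) / \<theta> * ((3 * real N + 8 * cd \<theta>) / real m) / (1/2)"
    by (rule rho_bound(1)[OF assms(1,2) m(1) d _ e]) simp
  then show ?thesis by (simp add: TT_def algebra_simps)
qed

lemma rho_R2:
  assumes "0 < \<theta>" "\<theta> < 1" "big \<theta> N m" "m mod 3 = 2" "1 \<le> N"
  shows "rho \<theta> N m \<le> 16/3 * TT \<theta> * (3 * real N + 4 * cd \<theta>)"
proof -
  have m: "2 \<le> m" "4 * real N \<le> real m" "4 + real N \<le> cu \<theta> * real m" using assms(3) by (auto simp: big_def)
  have mod0: "Suc m mod 3 = 0" using assms(4) by presburger
  have mod1: "(m - 1) mod 3 = 1"
  proof -
    obtain j where j: "m = Suc j" using m by (cases m) auto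
    show ?thesis using assms(4) unfolding j by (simp add: mod_Suc split: if_splits)
  qed
  have x: "2 \<le> real m" using m by simp
  have cu0: "0 < cu \<theta>" using cu_pos[OF assms(1,2)] .
  have cd0: "0 < cd \<theta>" using cd_pos[OF assms(1,2)] .
  define k where "k = real m - 1"
  have k1: "1 \<le> k" and mk: "real m = k + 1" using x by (auto simp: k_def)
  have rm1: "real (m - 1) = k" using m by (simp add: k_def of_nat_diff)
  let ?B = "{u. (b_w (Suc m) - eps_w (Suc m)) / real N \<le> u}"
  let ?a = "measure_pmf.prob (W_law N (Suc m)) ?B"
  have sS: "1 / (2 * real (Suc m)) \<le> s_w (Suc m)" "s_w (Suc m) < 1" "0 < s_w (Suc m)"
    using s_w_ge2[of "Suc m"] m by auto
  have "1 / (2 * real (Suc m)) \<le> 1 - (1 - s_w (Suc m)) ^ N"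
    using bern_upper[of "s_w (Suc m)" N] sS assms(5) by simp
  also have "\<dots> \<le> ?a" by (rule tail_lower) simp
  finally have a_low: "1 / (2 * real (Suc m)) \<le> ?a" .
  have a_G: "1 * ?a \<le> measure_pmf.expectation (W_law N (Suc m)) (\<lambda>u. min 1 (cu \<theta> * u / eps_w m))"
  proof (rule exp_lower)
    fix u assume u: "u \<in> set_pmf (W_law N (Suc m))"
    have "0 < u" using W_support[OF _ u] by simp
    moreover have "0 < eps_w m" using eps_pos m by simp
    ultimately show "0 \<le> min 1 (cu \<theta> * u / eps_w m)" "min 1 (cu \<theta> * u / eps_w m) \<le> 1" using cu0 by auto
    assume "u \<in> ?B"
    then have uB: "(b_w (Suc m) - eps_w (Suc m)) / real N \<le> u" by simp
    have "eps_w (Suc m) \<le> 1" using eps_le1[of "Suc m"] by simp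
    then have "real m / real N \<le> (b_w (Suc m) - eps_w (Suc m)) / real N"
      using assms(5) by (intro divide_right_mono) (auto simp: b_w_def)
    with uB have um: "real m / real N \<le> u" by linarith
    have "real N \<le> cu \<theta> * real m" using m by linarith
    then have q1: "1 \<le> cu \<theta> * real m / real N" using assms(5) by (simp add: field_simps)
    have "1 \<le> real m" using x by simp
    also have "\<dots> = 1 * real m" by simp
    also have "\<dots> \<le> (cu \<theta> * real m / real N) * real m"
      using q1 x by (intro mult_right_mono) auto
    also have "\<dots> = cu \<theta> * (real m / real N) * real m" by simp
    also have "\<dots> \<le> cu \<theta> * u * real m" using um cu0 x by (intro mult_right_mono mult_left_mono) auto
    also have "\<dots> = cu \<theta> * u / eps_w m" unfolding eps_m2[OF assms(4)] by simp
    finally show "1 \<le> min 1 (cu \<theta> * u / eps_w m)" by simp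
  qed simp
  have "?a * Z N m \<le> Acc N m (Suc m) (cu \<theta>)"
    by (rule Acc_lower_gen) (use m cu0 a_G in auto)
  moreover have "1 / (2 * real (Suc m)) * (3/4) \<le> ?a * Z N m"
    using a_low Z_34[of m N] m by (intro mult_mono) auto
  ultimately have e: "1 / (2 * real (Suc m)) * (3/4) \<le> Acc N m (Suc m) (cu \<theta>)" by linarith
  have "Acc N m (m - 1) (cd \<theta>) \<le> min 1 (cd \<theta> * eps_w (m - 1) / eps_w m) + (1 - Z N m) + (1 - Z N (m - 1))"
    using Acc_upper[of m "m - 1" "cd \<theta>" N] m cd0 by simp
  also have "\<dots> \<le> cd \<theta> * ((k+1) / k^2) + real N / (k + 1) + real N / k"
  proof -
    have "min 1 (cd \<theta> * eps_w (m - 1) / eps_w m) \<le> cd \<theta> * eps_w (m - 1) / eps_w m" by simp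
    also have "\<dots> = cd \<theta> * ((k+1) / k^2)"
      unfolding eps_m2[OF assms(4)] eps_m1[OF mod1] rm1 mk using k1 by (simp add: field_simps)
    finally have mn: "min 1 (cd \<theta> * eps_w (m - 1) / eps_w m) \<le> cd \<theta> * ((k+1) / k^2)" .
    have z1: "1 - Z N m \<le> real N / (k + 1)" using one_minus_Z[of m N] m mk by simp
    have "1 \<le> m - 1" using m by simp
    then have z2: "1 - Z N (m - 1) \<le> real N / k" using one_minus_Z[of "m - 1" N] rm1 by simp
    show ?thesis using mn z1 z2 by linarith
  qed
  also have "\<dots> \<le> cd \<theta> * (4 / (k+1)) + real N / (k + 1) + real N * (2 / (k + 1))"
  proof -
    have "cd \<theta> * ((k+1) / k^2) \<le> cd \<theta> * (4 / (k+1))" using ineq_b[OF k1] cd0 by (intro mult_left_mono) auto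
    moreover have "real N * (1 / k) \<le> real N * (2 / (k+1))" using ineq_c[OF k1] by (intro mult_left_mono) auto
    ultimately show ?thesis by simp
  qed
  also have "\<dots> = (3 * real N + 4 * cd \<theta>) / real m" unfolding mk using k1 by (simp add: add_divide_distrib)
  finally have d: "Acc N m (m - 1) (cd \<theta>) \<le> (3 * real N + 4 * cd \<theta>) / real m" .
  have "rho \<theta> N m \<le> (1 - \<theta>) / \<theta> * ((3 * real N + 4 * cd \<theta>) / real m) / (1 / (2 * real (Suc m)) * (3/4))"
    by (rule rho_bound(1)[OF assms(1,2) m(1) d _ e]) simp
  also have "\<dots> = TT \<theta> * (3 * real N + 4 * cd \<theta>) * (8/3) * ((k + 2) / (k + 1))"
    unfolding TT_def mk using k1 \<open>0 < \<theta>\<close> by (simp add: divide_simps) (simp add: algebra_simps mk)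
  also have "\<dots> \<le> TT \<theta> * (3 * real N + 4 * cd \<theta>) * (8/3) * 2"
  proof -
    have "(k + 2) / (k + 1) \<le> 2" using k1 by (simp add: field_simps)
    moreover have "0 \<le> TT \<theta> * (3 * real N + 4 * cd \<theta>) * (8/3)" using TT_pos[OF assms(1,2)] cd0 by simp
    ultimately show ?thesis by (intro mult_left_mono) auto
  qed
  finally show ?thesis by simp
qed

lemma Acc_pos:
  assumes "1 \<le> m" "1 \<le> y" "0 < c"
  shows "0 < Acc N m y c"
proof -
  have "0 < min 1 (c * eps_w y / eps_w m)" using assms eps_pos[of y] eps_pos[of m] by simp
  moreover have "0 < Z N y" "0 < Z N m" using Z_low assms by auto
  ultimately have "0 < min 1 (c * eps_w y / eps_w m) * Z N y * Z N m" by simp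
  also have "\<dots> \<le> Acc N m y c" using Acc_lower[of m y c N] assms by simp
  finally show ?thesis .
qed

lemma pu_pos: "0 < \<theta> \<Longrightarrow> \<theta> < 1 \<Longrightarrow> 1 \<le> m \<Longrightarrow> 0 < pu \<theta> N m"
  using pu_eq[of \<theta> m N] Acc_pos[of m "Suc m" "cu \<theta>" N] cu_pos[of \<theta>] by simp

lemma pd_pos: "0 < \<theta> \<Longrightarrow> \<theta> < 1 \<Longrightarrow> 2 \<le> m \<Longrightarrow> 0 < pd \<theta> N m"
  using pd_eq[of \<theta> m N] Acc_pos[of m "m - 1" "cd \<theta>" N] cd_pos[of \<theta>] by simp

lemma rho_pos: "0 < \<theta> \<Longrightarrow> \<theta> < 1 \<Longrightarrow> 2 \<le> m \<Longrightarrow> 0 < rho \<theta> N m"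
  unfolding rho_def using pu_pos[of \<theta> m N] pd_pos[of \<theta> m N] by simp

definition CC :: "real \<Rightarrow> nat \<Rightarrow> real" where "CC \<theta> N = 8 * TT \<theta> * (3 * real N + 8 * cd \<theta> + 1)"

definition rb :: "real \<Rightarrow> nat \<Rightarrow> nat \<Rightarrow> real" where
  "rb \<theta> N m = (if m mod 3 = 1 then CC \<theta> N / real m else CC \<theta> N)"

lemma rho_rb:
  assumes "0 < \<theta>" "\<theta> < 1" "big \<theta> N m" "1 \<le> N"
  shows "rho \<theta> N m \<le> rb \<theta> N m"
proof -
  have T: "0 < TT \<theta>" "0 < cd \<theta>" using TT_pos cd_pos assms by auto
  have m: "2 \<le> m" using assms(3) by (simp add: big_def)
  consider "m mod 3 = 0" | "m mod 3 = 1" | "m mod 3 = 2" by linarith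
  then show ?thesis
  proof cases
    case 1
    have "rho \<theta> N m \<le> 2 * TT \<theta>" by (rule rho_R0[OF assms(1-3) 1])
    also have "\<dots> \<le> CC \<theta> N" unfolding CC_def using T by (simp add: algebra_simps)
    finally show ?thesis using 1 by (simp add: rb_def)
  next
    case 2
    have "rho \<theta> N m \<le> 2 * TT \<theta> * (3 * real N + 8 * cd \<theta>) / real m" by (rule rho_R1[OF assms(1-3) 2])
    also have "\<dots> \<le> CC \<theta> N / real m" unfolding CC_def using T m
      by (intro divide_right_mono) (auto simp: algebra_simps)
    finally show ?thesis using 2 by (simp add: rb_def)
  next
    case 3
    have "rho \<theta> N m \<le> 16/3 * TT \<theta> * (3 * real N + 4 * cd \<theta>)" by (rule rho_R2[OF assms(1-3) 3 assms(4)])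
    also have "\<dots> \<le> CC \<theta> N" unfolding CC_def using T by (simp add: algebra_simps)
    finally show ?thesis using 3 by (simp add: rb_def)
  qed
qed

lemma CC_pos: "0 < \<theta> \<Longrightarrow> \<theta> < 1 \<Longrightarrow> 0 < CC \<theta> N"
proof -
  assume a: "0 < \<theta>" "\<theta> < 1"
  have "0 < TT \<theta>" "0 < cd \<theta>" using TT_pos[OF a] cd_pos[OF a] by auto
  then show ?thesis unfolding CC_def by (intro mult_pos_pos) auto
qed

lemma rb_prod:
  assumes "0 < \<theta>" "\<theta> < 1" "1 \<le> m"
  shows "rb \<theta> N m * rb \<theta> N (m+1) * rb \<theta> N (m+2) \<le> CC \<theta> N ^ 3 / real m"
proof -
  let ?C = "CC \<theta> N"
  have C: "0 < ?C" using CC_pos assms by auto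
  have x: "1 \<le> real m" using assms by simp
  have "m mod 3 = 1 \<or> (m+1) mod 3 = 1 \<or> (m+2) mod 3 = 1" by presburger
  then consider "m mod 3 = 1" | "(m+1) mod 3 = 1" | "(m+2) mod 3 = 1" by blast
  then show ?thesis
  proof cases
    case 1
    then have "(m+1) mod 3 \<noteq> 1" "(m+2) mod 3 \<noteq> 1" by presburger+
    then show ?thesis using 1 by (simp add: rb_def power3_eq_cube)
  next
    case 2
    then have "m mod 3 \<noteq> 1" "(m+2) mod 3 \<noteq> 1" by presburger+
    then have "rb \<theta> N m * rb \<theta> N (m+1) * rb \<theta> N (m+2) = ?C^3 / (real m + 1)"
      using 2 by (simp add: rb_def power3_eq_cube)
    also have "\<dots> \<le> ?C^3 / real m" using x C by (intro divide_left_mono) auto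
    finally show ?thesis .
  next
    case 3
    then have "m mod 3 \<noteq> 1" "(m+1) mod 3 \<noteq> 1" by presburger+
    then have "rb \<theta> N m * rb \<theta> N (m+1) * rb \<theta> N (m+2) = ?C^3 / (real m + 2)"
      using 3 by (simp add: rb_def power3_eq_cube)
    also have "\<dots> \<le> ?C^3 / real m" using x C by (intro divide_left_mono) auto
    finally show ?thesis .
  qed
qed

lemma big_eventually:
  assumes "0 < \<theta>" "\<theta> < 1"
  obtains M0 where "\<And>m. M0 \<le> m \<Longrightarrow> big \<theta> N m"
proof -
  obtain M0 :: nat where M0: "4 * real N + (4 + real N) / cu \<theta> + 2 \<le> real M0"
    by (meson real_arch_simple)
  have c: "0 < cu \<theta>" using cu_pos assms by auto
  have b0: "big \<theta> N M0"
  proof -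
    have "0 \<le> (4 + real N) / cu \<theta>" using c by simp
    then have "2 \<le> M0" "4 * real N \<le> real M0" using M0 by linarith+
    moreover have "(4 + real N) / cu \<theta> \<le> real M0" using M0 by simp
    then have "4 + real N \<le> cu \<theta> * real M0" using c by (simp add: field_simps)
    ultimately show ?thesis by (simp add: big_def)
  qed
  have "big \<theta> N m" if "M0 \<le> m" for m
    using that
  proof (induction m rule: dec_induct)
    case base then show ?case by (rule b0)
  next
    case (step n) then show ?case using big_Suc assms by blast
  qed
  then show ?thesis using that by blast
qed

lemma rho3_eventually:
  assumes "0 < \<theta>" "\<theta> < 1" "1 \<le> N"
  obtains M where "1 \<le> M" "\<And>m. M \<le> m \<Longrightarrow> rho \<theta> N m * rho \<theta> N (m+1) * rho \<theta> N (m+2) \<le> 1/2"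
proof -
  obtain M0 where M0: "\<And>m. M0 \<le> m \<Longrightarrow> big \<theta> N m" using big_eventually assms by blast
  obtain M1 :: nat where M1: "2 * CC \<theta> N ^ 3 \<le> real M1" by (meson real_arch_simple)
  define M where "M = max (max M0 M1) 1"
  have "rho \<theta> N m * rho \<theta> N (m+1) * rho \<theta> N (m+2) \<le> 1/2" if m: "M \<le> m" for m
  proof -
    have b: "big \<theta> N m" "big \<theta> N (m+1)" "big \<theta> N (m+2)" using M0 m by (auto simp: M_def)
    have m2: "2 \<le> m" using b(1) by (simp add: big_def)
    have r: "rho \<theta> N m \<le> rb \<theta> N m" "rho \<theta> N (m+1) \<le> rb \<theta> N (m+1)" "rho \<theta> N (m+2) \<le> rb \<theta> N (m+2)"
      using rho_rb[OF assms(1,2) _ assms(3)] b by auto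
    have p: "0 \<le> rho \<theta> N m" "0 \<le> rho \<theta> N (m+1)" "0 \<le> rho \<theta> N (m+2)"
      using rho_pos[OF assms(1,2)] m2 by (auto intro: less_imp_le)
    have "rho \<theta> N m * rho \<theta> N (m+1) \<le> rb \<theta> N m * rb \<theta> N (m+1)"
      using r p by (intro mult_mono) auto
    then have "rho \<theta> N m * rho \<theta> N (m+1) * rho \<theta> N (m+2) \<le> rb \<theta> N m * rb \<theta> N (m+1) * rb \<theta> N (m+2)"
      using r p by (intro mult_mono) (auto intro: order.trans[OF _ r(1)] mult_nonneg_nonneg)
    also have "\<dots> \<le> CC \<theta> N ^ 3 / real m" using rb_prod[OF assms(1,2)] m2 by simp
    also have "\<dots> \<le> 1/2"
    proof -
      have "2 * CC \<theta> N ^ 3 \<le> real m" using M1 m by (auto simp: M_def)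
      then show ?thesis using m2 by (simp add: field_simps)
    qed
    finally show ?thesis .
  qed
  then show ?thesis using that[of M] by (auto simp: M_def)
qed

definition dd :: "real \<Rightarrow> nat \<Rightarrow> nat \<Rightarrow> real" where
  "dd \<theta> N n = (\<Prod>k\<in>{2..n}. rho \<theta> N k)"

lemma dd_Suc: "1 \<le> n \<Longrightarrow> dd \<theta> N (Suc n) = dd \<theta> N n * rho \<theta> N (Suc n)"
  unfolding dd_def by simp

lemma dd_pos: "0 < \<theta> \<Longrightarrow> \<theta> < 1 \<Longrightarrow> 0 < dd \<theta> N n"
  unfolding dd_def using rho_pos by (intro prod_pos) auto

lemma dd_3: "1 \<le> n \<Longrightarrow> dd \<theta> N (n + 3) = dd \<theta> N n * (rho \<theta> N (n+1) * rho \<theta> N (n+1+1) * rho \<theta> N (n+1+2))"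
proof -
  assume n: "1 \<le> n"
  have "dd \<theta> N (n + 3) = dd \<theta> N (Suc (Suc (Suc n)))" by (simp add: numeral_3_eq_3)
  also have "\<dots> = dd \<theta> N n * rho \<theta> N (Suc n) * rho \<theta> N (Suc (Suc n)) * rho \<theta> N (Suc (Suc (Suc n)))"
    using n by (simp add: dd_Suc)
  finally show ?thesis by (simp add: algebra_simps)
qed

lemma dd_geom:
  assumes "0 < \<theta>" "\<theta> < 1" "1 \<le> N"
  obtains K where "\<And>n. dd \<theta> N n \<le> K * (7/8) ^ n"
proof -
  obtain M where M: "1 \<le> M" "\<And>m. M \<le> m \<Longrightarrow> rho \<theta> N m * rho \<theta> N (m+1) * rho \<theta> N (m+2) \<le> 1/2"
    using rho3_eventually[OF assms] by blast
  define K where "K = Max ((\<lambda>i. dd \<theta> N i / (7/8) ^ i) ` {..M+2})"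
  have base: "dd \<theta> N n \<le> K * (7/8) ^ n" if "n \<le> M + 2" for n
  proof -
    have "dd \<theta> N n / (7/8) ^ n \<le> K" unfolding K_def using that by (intro Max_ge) auto
    then show ?thesis by (simp add: field_simps)
  qed
  have "dd \<theta> N n \<le> K * (7/8) ^ n" for n
  proof (induction n rule: less_induct)
    case (less n)
    show ?case
    proof (cases "n \<le> M + 2")
      case True then show ?thesis by (rule base)
    next
      case False
      define n' where "n' = n - 3"
      have n: "n = n' + 3" "M \<le> n'" "1 \<le> n'" using False M(1) by (auto simp: n'_def)
      have "dd \<theta> N n = dd \<theta> N n' * (rho \<theta> N (n'+1) * rho \<theta> N (n'+1+1) * rho \<theta> N (n'+1+2))"
        unfolding n(1) by (rule dd_3[OF n(3)])
      also have "\<dots> \<le> dd \<theta> N n' * (1/2)"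
        using M(2)[of "n'+1"] n dd_pos[OF assms(1,2), of N n'] by (intro mult_left_mono) auto
      also have "\<dots> \<le> K * (7/8) ^ n' * (1/2)"
        using less.IH[of n'] n by simp
      also have "\<dots> \<le> K * (7/8) ^ n' * (7/8)^3"
      proof -
        have "0 \<le> K * (7/8) ^ n'" using less.IH[of n'] n dd_pos[OF assms(1,2), of N n'] by linarith
        then show ?thesis by (intro mult_left_mono) (auto simp: power3_eq_cube)
      qed
      also have "\<dots> = K * (7/8) ^ n" unfolding n(1) by (simp add: power_add)
      finally show ?thesis .
    qed
  qed
  then show ?thesis using that by blast
qed

lemma dd_summable:
  assumes "0 < \<theta>" "\<theta> < 1" "1 \<le> N"
  shows "summable (dd \<theta> N)"
proof -
  obtain K where K: "\<And>n. dd \<theta> N n \<le> K * (7/8) ^ n" using dd_geom[OF assms] by blast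
  show ?thesis
  proof (rule summable_comparison_test')
    show "summable (\<lambda>n. K * (7/8::real) ^ n)" by (intro summable_mult summable_geometric) auto
    show "norm (dd \<theta> N n) \<le> K * (7/8) ^ n" for n using K[of n] dd_pos[OF assms(1,2), of N n] by simp
  qed
qed

definition TL :: "real \<Rightarrow> nat \<Rightarrow> nat \<Rightarrow> real" where
  "TL \<theta> N n = (\<Sum>i. dd \<theta> N (i + n))"

lemma TL_step:
  assumes "0 < \<theta>" "\<theta> < 1" "1 \<le> N"
  shows "TL \<theta> N n = dd \<theta> N n + TL \<theta> N (Suc n)"
proof -
  have s: "summable (\<lambda>i. dd \<theta> N (i + n))" using dd_summable[OF assms] by simp
  have "(\<Sum>i. dd \<theta> N (Suc i + n)) = (\<Sum>i. dd \<theta> N (i + n)) - dd \<theta> N (0 + n)"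
    by (rule suminf_split_head[OF s])
  then show ?thesis unfolding TL_def by simp
qed

lemma TL_nonneg:
  assumes "0 < \<theta>" "\<theta> < 1" "1 \<le> N"
  shows "0 \<le> TL \<theta> N n"
  unfolding TL_def using dd_summable[OF assms] dd_pos[OF assms(1,2)]
  by (intro suminf_nonneg) (auto intro: less_imp_le)

lemma TL_mono:
  assumes "0 < \<theta>" "\<theta> < 1" "1 \<le> N" "a \<le> b"
  shows "TL \<theta> N b \<le> TL \<theta> N a"
  using assms(4)
proof (induction b rule: dec_induct)
  case base then show ?case by simp
next
  case (step n)
  then show ?case using TL_step[OF assms(1-3), of n] dd_pos[OF assms(1,2), of N n] by simp
qed

lemma kernel_pow_Suc: "kernel_pow P (Suc n) x = kernel_pow P n x \<bind> P"
  by (simp add: kernel_pow_def)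

lemma kernel_pow_0: "kernel_pow P 0 x = return_pmf x"
  by (simp add: kernel_pow_def)

lemma kernel_pow_support:
  assumes "\<And>x. x \<in> S \<Longrightarrow> set_pmf (P x) \<subseteq> S" "x \<in> S"
  shows "set_pmf (kernel_pow P n x) \<subseteq> S"
proof (induction n)
  case 0 then show ?case using assms(2) by (simp add: kernel_pow_0)
next
  case (Suc n) then show ?case using assms(1) by (auto simp: kernel_pow_Suc)
qed

lemma green:
  fixes P :: "'a \<Rightarrow> 'a pmf" and h :: "'a \<Rightarrow> ennreal"
  assumes closed: "\<And>x. x \<in> S \<Longrightarrow> set_pmf (P x) \<subseteq> S"
    and super: "\<And>x. x \<in> S \<Longrightarrow> indicator {y} x + (\<integral>\<^sup>+ z. h z \<partial>measure_pmf (P x)) \<le> h x"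
    and x: "x \<in> S"
  shows "(\<Sum>n<K. ennreal (pmf (kernel_pow P n x) y)) + (\<integral>\<^sup>+ z. h z \<partial>measure_pmf (kernel_pow P K x)) \<le> h x"
proof (induction K)
  case 0 then show ?case by (simp add: kernel_pow_0)
next
  case (Suc K)
  let ?\<mu> = "kernel_pow P K x"
  have sup: "set_pmf ?\<mu> \<subseteq> S" by (rule kernel_pow_support[OF closed x])
  have "ennreal (pmf ?\<mu> y) + (\<integral>\<^sup>+ z. h z \<partial>measure_pmf (kernel_pow P (Suc K) x))
        = (\<integral>\<^sup>+ z. indicator {y} z \<partial>measure_pmf ?\<mu>) + (\<integral>\<^sup>+ z. (\<integral>\<^sup>+ w. h w \<partial>measure_pmf (P z)) \<partial>measure_pmf ?\<mu>)"
    by (simp add: kernel_pow_Suc emeasure_pmf_single)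
  also have "\<dots> = (\<integral>\<^sup>+ z. (indicator {y} z + (\<integral>\<^sup>+ w. h w \<partial>measure_pmf (P z))) \<partial>measure_pmf ?\<mu>)"
    by (rule nn_integral_add[symmetric]) auto
  also have "\<dots> \<le> (\<integral>\<^sup>+ z. h z \<partial>measure_pmf ?\<mu>)"
    using sup super by (intro nn_integral_mono_AE AE_pmfI) auto
  finally have step: "ennreal (pmf ?\<mu> y) + (\<integral>\<^sup>+ z. h z \<partial>measure_pmf (kernel_pow P (Suc K) x))
        \<le> (\<integral>\<^sup>+ z. h z \<partial>measure_pmf ?\<mu>)" .
  have "(\<Sum>n<Suc K. ennreal (pmf (kernel_pow P n x) y)) + (\<integral>\<^sup>+ z. h z \<partial>measure_pmf (kernel_pow P (Suc K) x))
      = (\<Sum>n<K. ennreal (pmf (kernel_pow P n x) y)) + (ennreal (pmf ?\<mu> y) + (\<integral>\<^sup>+ z. h z \<partial>measure_pmf (kernel_pow P (Suc K) x)))"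
    by (simp add: add.assoc)
  also have "\<dots> \<le> (\<Sum>n<K. ennreal (pmf (kernel_pow P n x) y)) + (\<integral>\<^sup>+ z. h z \<partial>measure_pmf ?\<mu>)"
    using step by (rule add_left_mono)
  also have "\<dots> \<le> h x" by (rule Suc.IH)
  finally show ?case .
qed

lemma green_sum:
  fixes P :: "'a \<Rightarrow> 'a pmf" and h :: "'a \<Rightarrow> ennreal"
  assumes closed: "\<And>x. x \<in> S \<Longrightarrow> set_pmf (P x) \<subseteq> S"
    and super: "\<And>x. x \<in> S \<Longrightarrow> indicator {y} x + (\<integral>\<^sup>+ z. h z \<partial>measure_pmf (P x)) \<le> h x"
    and x: "x \<in> S"
  shows "(\<Sum>n. ennreal (pmf (kernel_pow P n x) y)) \<le> h x"
proof -
  have "(\<Sum>n<K. ennreal (pmf (kernel_pow P n x) y)) \<le> h x" for K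
  proof -
    have "(\<Sum>n<K. ennreal (pmf (kernel_pow P n x) y)) \<le> (\<Sum>n<K. ennreal (pmf (kernel_pow P n x) y)) + (\<integral>\<^sup>+ z. h z \<partial>measure_pmf (kernel_pow P K x))"
      by (rule add_increasing2) auto
    also have "\<dots> \<le> h x" by (rule green[OF closed super x])
    finally show ?thesis .
  qed
  then show ?thesis unfolding suminf_eq_SUP by (rule SUP_least)
qed

lemma exp3:
  assumes "0 < \<theta>" "\<theta> < 1" "1 \<le> x" "\<And>z. 0 \<le> f z"
  shows "(\<integral>\<^sup>+ z. ennreal (f z) \<partial>measure_pmf (noisy_step \<theta> N x))
       = ennreal (f (x - 1) * pd \<theta> N x + f x * (1 - pu \<theta> N x - pd \<theta> N x) + f (Suc x) * pu \<theta> N x)"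
proof -
  let ?P = "noisy_step \<theta> N x"
  have A: "set_pmf ?P \<subseteq> {x - 1, x, Suc x}" by (rule set_noisy(1)[OF assms(1-3)])
  have d: "x - 1 \<noteq> x" "x - 1 \<noteq> Suc x" "x \<noteq> Suc x" using assms(3) by auto
  have "(\<Sum>a\<in>{x - 1, x, Suc x}. pmf ?P a) = 1" by (rule sum_pmf_eq_1[OF _ A]) simp
  then have s1: "pmf ?P x = 1 - pu \<theta> N x - pd \<theta> N x" using d unfolding pu_def pd_def by simp
  have "(\<integral>\<^sup>+ z. ennreal (f z) \<partial>measure_pmf ?P) = (\<Sum>a\<in>{x - 1, x, Suc x}. ennreal (f a) * pmf ?P a)"
    using A by (intro nn_integral_measure_pmf_support) auto
  also have "\<dots> = ennreal (f (x - 1)) * pmf ?P (x - 1) + ennreal (f x) * pmf ?P x + ennreal (f (Suc x)) * pmf ?P (Suc x)"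
    using d by (simp add: add.assoc)
  also have "\<dots> = ennreal (f (x - 1) * pmf ?P (x - 1) + f x * pmf ?P x + f (Suc x) * pmf ?P (Suc x))"
    using assms(4) by (simp add: ennreal_mult ennreal_plus)
  finally show ?thesis unfolding s1 by (simp add: pu_def pd_def)
qed

definition hr :: "real \<Rightarrow> nat \<Rightarrow> nat \<Rightarrow> nat \<Rightarrow> real" where
  "hr \<theta> N y z = TL \<theta> N (max z y) / (pu \<theta> N y * dd \<theta> N y)"

lemma super_real:
  assumes t: "0 < \<theta>" "\<theta> < 1" "1 \<le> N" and y: "1 \<le> y" and x: "1 \<le> x"
  shows "indicator {y} x + (hr \<theta> N y (x - 1) * pd \<theta> N x + hr \<theta> N y x * (1 - pu \<theta> N x - pd \<theta> N x)
            + hr \<theta> N y (Suc x) * pu \<theta> N x) \<le> hr \<theta> N y x"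
proof -
  define K where "K = pu \<theta> N y * dd \<theta> N y"
  have K: "0 < K" unfolding K_def using pu_pos[OF t(1,2) y] dd_pos[OF t(1,2)] by simp
  define H where "H z = TL \<theta> N (max z y)" for z
  have hr: "hr \<theta> N y z = H z / K" for z by (simp add: hr_def H_def K_def)
  let ?pu = "pu \<theta> N x" and ?pd = "pd \<theta> N x"
  have eq: "hr \<theta> N y (x - 1) * ?pd + hr \<theta> N y x * (1 - ?pu - ?pd) + hr \<theta> N y (Suc x) * ?pu
        = hr \<theta> N y x + (?pd * (H (x - 1) - H x) + ?pu * (H (Suc x) - H x)) / K"
    unfolding hr using K by (simp add: field_simps)
  have main: "indicator {y} x * K + (?pd * (H (x - 1) - H x) + ?pu * (H (Suc x) - H x)) \<le> 0"
  proof (cases "x < y")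
    case True
    then have "H (x - 1) = H x" "H (Suc x) = H x" by (auto simp: H_def max_def)
    then show ?thesis using True by simp
  next
    case False
    show ?thesis
    proof (cases "x = y")
      case True
      have "H (x - 1) = H x" using True by (simp add: H_def max_def)
      moreover have "H (Suc x) - H x = - dd \<theta> N y"
        using True TL_step[OF t, of y] by (simp add: H_def max_def)
      ultimately show ?thesis using True by (simp add: K_def)
    next
      case False2: False
      then have xy: "y < x" using False by simp
      then have x2: "2 \<le> x" using y by simp
      have m1: "max (x - 1) y = x - 1" "max x y = x" using xy by auto
      have h1: "H (x - 1) - H x = dd \<theta> N (x - 1)"
        using TL_step[OF t, of "x - 1"] x2 unfolding H_def m1 by simp
      have h2: "H (Suc x) - H x = - dd \<theta> N x"
        using TL_step[OF t, of x] xy by (simp add: H_def max_def)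
      have "dd \<theta> N x = dd \<theta> N (Suc (x - 1))" using x2 by simp
      also have "\<dots> = dd \<theta> N (x - 1) * rho \<theta> N x" using dd_Suc[of "x - 1" \<theta> N] x2 by simp
      finally have "?pu * dd \<theta> N x = ?pd * dd \<theta> N (x - 1)"
        using pu_pos[OF t(1,2) x, of N] unfolding rho_def by (simp add: field_simps)
      then have "?pd * (H (x - 1) - H x) + ?pu * (H (Suc x) - H x) = 0"
        unfolding h1 h2 by (simp add: algebra_simps)
      then show ?thesis using xy by simp
    qed
  qed
  have "indicator {y} x + (hr \<theta> N y (x - 1) * ?pd + hr \<theta> N y x * (1 - ?pu - ?pd) + hr \<theta> N y (Suc x) * ?pu)
      = hr \<theta> N y x + (indicator {y} x * K + (?pd * (H (x - 1) - H x) + ?pu * (H (Suc x) - H x))) / K"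
    unfolding eq using K by (simp add: field_simps)
  also have "\<dots> \<le> hr \<theta> N y x" using main K by (simp add: divide_nonpos_pos)
  finally show ?thesis .
qed

lemma hr_nonneg: "0 < \<theta> \<Longrightarrow> \<theta> < 1 \<Longrightarrow> 1 \<le> N \<Longrightarrow> 1 \<le> y \<Longrightarrow> 0 \<le> hr \<theta> N y z"
  unfolding hr_def using TL_nonneg[of \<theta> N] pu_pos[of \<theta> y N] dd_pos[of \<theta> N y] by simp

lemma hr_le: "0 < \<theta> \<Longrightarrow> \<theta> < 1 \<Longrightarrow> 1 \<le> N \<Longrightarrow> 1 \<le> y \<Longrightarrow> hr \<theta> N y z \<le> TL \<theta> N y / (pu \<theta> N y * dd \<theta> N y)"
  unfolding hr_def using TL_mono[of \<theta> N y "max z y"] pu_pos[of \<theta> y N] dd_pos[of \<theta> N y]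
  by (intro divide_right_mono) auto

lemma super_ennreal:
  assumes t: "0 < \<theta>" "\<theta> < 1" "1 \<le> N" and y: "1 \<le> y" and x: "1 \<le> x"
  shows "indicator {y} x + (\<integral>\<^sup>+ z. ennreal (hr \<theta> N y z) \<partial>measure_pmf (noisy_step \<theta> N x)) \<le> ennreal (hr \<theta> N y x)"
proof -
  let ?E = "hr \<theta> N y (x - 1) * pd \<theta> N x + hr \<theta> N y x * (1 - pu \<theta> N x - pd \<theta> N x) + hr \<theta> N y (Suc x) * pu \<theta> N x"
  have e: "(\<integral>\<^sup>+ z. ennreal (hr \<theta> N y z) \<partial>measure_pmf (noisy_step \<theta> N x)) = ennreal ?E"
    by (rule exp3[OF t(1,2) x]) (rule hr_nonneg[OF t y])
  have E0: "0 \<le> ?E"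
  proof -
    have "ennreal ?E = (\<integral>\<^sup>+ z. ennreal (hr \<theta> N y z) \<partial>measure_pmf (noisy_step \<theta> N x))" using e by simp
    have "0 \<le> pd \<theta> N x" "0 \<le> pu \<theta> N x" "0 \<le> 1 - pu \<theta> N x - pd \<theta> N x"
    proof -
      show "0 \<le> pd \<theta> N x" "0 \<le> pu \<theta> N x" by (simp_all add: pd_def pu_def)
      have A: "set_pmf (noisy_step \<theta> N x) \<subseteq> {x - 1, x, Suc x}" by (rule set_noisy(1)[OF t(1,2) x])
      have d: "x - 1 \<noteq> x" "x - 1 \<noteq> Suc x" "x \<noteq> Suc x" using x by auto
      have "(\<Sum>a\<in>{x - 1, x, Suc x}. pmf (noisy_step \<theta> N x) a) = 1" by (rule sum_pmf_eq_1[OF _ A]) simp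
      then have "pmf (noisy_step \<theta> N x) (x - 1) + pmf (noisy_step \<theta> N x) x + pmf (noisy_step \<theta> N x) (Suc x) = 1"
        using d by (simp add: add.assoc)
      then show "0 \<le> 1 - pu \<theta> N x - pd \<theta> N x" using pmf_nonneg[of "noisy_step \<theta> N x" x]
        unfolding pu_def pd_def by linarith
    qed
    then show ?thesis using hr_nonneg[OF t y] by (intro add_nonneg_nonneg mult_nonneg_nonneg) auto
  qed
  have "indicator {y} x + (\<integral>\<^sup>+ z. ennreal (hr \<theta> N y z) \<partial>measure_pmf (noisy_step \<theta> N x))
       = ennreal (indicator {y} x + ?E)"
    unfolding e using E0 by (simp add: ennreal_plus ennreal_indicator)
  also have "\<dots> \<le> ennreal (hr \<theta> N y x)"
    by (rule ennreal_leI) (rule super_real[OF t y x])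
  finally show ?thesis .
qed

lemma reach_up:
  assumes t: "0 < \<theta>" "\<theta> < 1" and x: "1 \<le> x"
  shows "x + d \<in> set_pmf (kernel_pow (noisy_step \<theta> N) d x)"
proof (induction d)
  case 0 then show ?case by (simp add: kernel_pow_0)
next
  case (Suc d)
  have "0 < pu \<theta> N (x + d)" using pu_pos[OF t] x by simp
  then have "Suc (x + d) \<in> set_pmf (noisy_step \<theta> N (x + d))" unfolding pu_def by (simp add: pmf_positive_iff)
  then show ?case using Suc by (auto simp: kernel_pow_Suc)
qed

lemma reach_down:
  assumes t: "0 < \<theta>" "\<theta> < 1"
  shows "d < x \<Longrightarrow> x - d \<in> set_pmf (kernel_pow (noisy_step \<theta> N) d x)"
proof (induction d)
  case 0 then show ?case by (simp add: kernel_pow_0)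
next
  case (Suc d)
  then have ih: "x - d \<in> set_pmf (kernel_pow (noisy_step \<theta> N) d x)" by simp
  have "0 < pd \<theta> N (x - d)" using pd_pos[OF t] Suc.prems by simp
  then have "x - d - 1 \<in> set_pmf (noisy_step \<theta> N (x - d))" unfolding pd_def by (simp add: pmf_positive_iff)
  moreover have "x - d - 1 = x - Suc d" by simp
  ultimately show ?case using ih by (auto simp: kernel_pow_Suc)
qed

theorem proposition3p14:
  fixes \<theta> :: real and N :: nat
  assumes "0 < \<theta>" and "\<theta> < 1" and "N \<ge> 1"
  shows "transient_chain (noisy_step \<theta> N) {m. m \<ge> 1}"
  unfolding transient_chain_def
proof (intro conjI ballI)
  fix x y :: nat assume x: "x \<in> {m. m \<ge> 1}" and y: "y \<in> {m. m \<ge> 1}"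
  show "\<exists>n. 0 < pmf (kernel_pow (noisy_step \<theta> N) n x) y"
  proof (cases "x \<le> y")
    case True
    then have "y = x + (y - x)" by simp
    then have "y \<in> set_pmf (kernel_pow (noisy_step \<theta> N) (y - x) x)"
      using reach_up[OF assms(1,2), of x "y - x" N] x by simp
    then show ?thesis by (auto simp: pmf_positive_iff)
  next
    case False
    then have "x - (x - y) = y" "x - y < x" using y by auto
    then have "y \<in> set_pmf (kernel_pow (noisy_step \<theta> N) (x - y) x)"
      using reach_down[OF assms(1,2), of "x - y" x N] by simp
    then show ?thesis by (auto simp: pmf_positive_iff)
  qed
next
  fix y :: nat assume y: "y \<in> {m. m \<ge> 1}"
  then have y1: "1 \<le> y" by simp
  define B where "B = TL \<theta> N y / (pu \<theta> N y * dd \<theta> N y)"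
  have "(\<Sum>n. ennreal (pmf (kernel_pow (noisy_step \<theta> N) n x) y)) \<le> ennreal B" if x: "x \<in> {m. m \<ge> 1}" for x
  proof -
    have "(\<Sum>n. ennreal (pmf (kernel_pow (noisy_step \<theta> N) n x) y)) \<le> ennreal (hr \<theta> N y x)"
    proof (rule green_sum[where S = "{m. m \<ge> 1}"])
      show "set_pmf (noisy_step \<theta> N z) \<subseteq> {m. m \<ge> 1}" if "z \<in> {m. m \<ge> 1}" for z
        using set_noisy(2)[OF assms(1,2)] that by auto
      show "indicator {y} z + (\<integral>\<^sup>+ w. ennreal (hr \<theta> N y w) \<partial>measure_pmf (noisy_step \<theta> N z)) \<le> ennreal (hr \<theta> N y z)"
        if "z \<in> {m. m \<ge> 1}" for z
        using super_ennreal[OF assms y1] that by simp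
    qed (rule x)
    also have "\<dots> \<le> ennreal B" unfolding B_def using hr_le[OF assms y1] by (rule ennreal_leI)
    finally show ?thesis .
  qed
  then have "(SUP x\<in>{m. m \<ge> 1}. (\<Sum>n. ennreal (pmf (kernel_pow (noisy_step \<theta> N) n x) y))) \<le> ennreal B"
    by (rule SUP_least)
  also have "\<dots> < \<infinity>" by simp
  finally show "(SUP x\<in>{m. m \<ge> 1}. (\<Sum>n. ennreal (pmf (kernel_pow (noisy_step \<theta> N) n x) y))) < \<infinity>" .
qed

end
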